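(* Let $G$ be a finite connected graph, viewed as an electrical network with unit resistance on each edge, and let $x,y$ be vertices of $G$. Then for every $\varepsilon>0$, $$\mathbb{P}_x\big(\tau_y\leq \varepsilon\, (R_{\mathrm{eff}}(x\leftrightarrow y))^2\big)\leq \varepsilon,$$ where $(X_t)$ is simple random walk on $G$ started at $x$.
   Context: $\tau_y=\min\{t\geq 1:X_t=y\}$. $R_{\mathrm{eff}}(x\leftrightarrow y)$ is the effective resistance between $x$ and $y$ in the network with unit edge resistances. *)

theory Defs
  imports "HOL-Probability.Probability"
begin

definition finite_connected_graph :: "'a set \<Rightarrow> ('a \<Rightarrow> 'a \<Rightarrow> bool) \<Rightarrow> bool" where
  "finite_connected_graph V E \<longleftrightarrow>
     finite V \<and> V \<noteq> {} \<and>
     (\<forall>u v. E u v \<longrightarrow> u \<in> V \<and> v \<in> V) \<and>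
     (\<forall>u v. E u v \<longrightarrow> E v u) \<and>
     (\<forall>u. \<not> E u u) \<and>
     (\<forall>u\<in>V. \<forall>v\<in>V. (u, v) \<in> {(a, b). E a b}\<^sup>*)"

text \<open>One step of simple random walk: uniform over the neighbours
  (an isolated vertex stays put; this only happens in the one-vertex graph).\<close>
definition srw_step :: "('a \<Rightarrow> 'a \<Rightarrow> bool) \<Rightarrow> 'a \<Rightarrow> 'a pmf" where
  "srw_step E v = (if {w. E v w} = {} then return_pmf v else pmf_of_set {w. E v w})"

fun srw_traj :: "('a \<Rightarrow> 'a \<Rightarrow> bool) \<Rightarrow> nat \<Rightarrow> 'a \<Rightarrow> 'a list pmf" where
  "srw_traj E 0 v = return_pmf [v]"
| "srw_traj E (Suc n) v = bind_pmf (srw_step E v) (\<lambda>w. map_pmf (\<lambda>xs. v # xs) (srw_traj E n w))"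

text \<open>P_x(tau_y \<le> T) where tau_y = min{t \<ge> 1 : X_t = y}.\<close>
definition srw_hit_prob :: "('a \<Rightarrow> 'a \<Rightarrow> bool) \<Rightarrow> 'a \<Rightarrow> 'a \<Rightarrow> real \<Rightarrow> real" where
  "srw_hit_prob E x y T =
     measure_pmf.prob (srw_traj E (nat \<lfloor>T\<rfloor>) x)
       {xs. \<exists>t. 1 \<le> t \<and> real t \<le> T \<and> xs ! t = y}"

text \<open>Dirichlet energy of f with unit edge resistances (each edge counted once).\<close>
definition energy :: "'a set \<Rightarrow> ('a \<Rightarrow> 'a \<Rightarrow> bool) \<Rightarrow> ('a \<Rightarrow> real) \<Rightarrow> real" where
  "energy V E f = (1/2) * (\<Sum>u\<in>V. \<Sum>v\<in>{w\<in>V. E u w}. (f u - f v)\<^sup>2)"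

text \<open>Effective conductance via the Dirichlet principle, and effective resistance
  as its reciprocal (R_eff(x,x) = 0).\<close>
definition eff_conductance :: "'a set \<Rightarrow> ('a \<Rightarrow> 'a \<Rightarrow> bool) \<Rightarrow> 'a \<Rightarrow> 'a \<Rightarrow> real" where
  "eff_conductance V E x y = Inf {energy V E f | f. f x = 1 \<and> f y = 0}"

definition eff_resistance :: "'a set \<Rightarrow> ('a \<Rightarrow> 'a \<Rightarrow> bool) \<Rightarrow> 'a \<Rightarrow> 'a \<Rightarrow> real" where
  "eff_resistance V E x y = (if x = y then 0 else 1 / eff_conductance V E x y)"

end

theory Submission
  imports Defs "HOL-Analysis.Analysis"
begin

definition dv :: "'a set \<Rightarrow> ('a \<Rightarrow> 'a \<Rightarrow> bool) \<Rightarrow> ('a \<Rightarrow> real) \<Rightarrow> 'a \<Rightarrow> real" where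
  "dv A E f u = (\<Sum>w\<in>{w\<in>A. E u w}. f u - f w)"

definition bil :: "'a set \<Rightarrow> ('a \<Rightarrow> 'a \<Rightarrow> bool) \<Rightarrow> ('a \<Rightarrow> real) \<Rightarrow> ('a \<Rightarrow> real) \<Rightarrow> real" where
  "bil V E f g = (1/2) * (\<Sum>u\<in>V. \<Sum>v\<in>{w\<in>V. E u w}. (f u - f v) * (g u - g v))"

lemma sum_swap_graph:
  assumes "finite A" "\<And>u v. E u v \<Longrightarrow> E v u"
  shows "(\<Sum>u\<in>A. \<Sum>w\<in>{w\<in>A. E u w}. h u w) = (\<Sum>w\<in>A. \<Sum>u\<in>{u\<in>A. E w u}. h u w)"
proof -
  have "(\<Sum>u\<in>A. \<Sum>w\<in>{w\<in>A. E u w}. h u w) = (\<Sum>w\<in>A. \<Sum>u\<in>{u\<in>A. E u w}. h u w)"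
    by (rule sum.swap_restrict) (use assms in auto)
  also have "\<dots> = (\<Sum>w\<in>A. \<Sum>u\<in>{u\<in>A. E w u}. h u w)"
  proof -
    have "\<And>w. {u\<in>A. E u w} = {u\<in>A. E w u}" using assms(2) by blast
    then show ?thesis by simp
  qed
  finally show ?thesis .
qed

lemma dv_antisym:
  assumes "finite A" "\<And>u v. E u v \<Longrightarrow> E v u"
  shows "(\<Sum>u\<in>A. dv A E f u) = 0"
proof -
  have "(\<Sum>u\<in>A. \<Sum>w\<in>{w\<in>A. E u w}. f u - f w) = (\<Sum>w\<in>A. \<Sum>u\<in>{u\<in>A. E w u}. f u - f w)"
    by (rule sum_swap_graph[OF assms])
  also have "\<dots> = - (\<Sum>w\<in>A. \<Sum>u\<in>{u\<in>A. E w u}. f w - f u)"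
    by (simp add: sum_negf[symmetric])
  finally show ?thesis unfolding dv_def by simp
qed

lemma bil_parts:
  assumes "finite V" "\<And>u v. E u v \<Longrightarrow> E v u"
  shows "bil V E f g = (\<Sum>u\<in>V. g u * dv V E f u)"
proof -
  have "(\<Sum>u\<in>V. \<Sum>v\<in>{w\<in>V. E u w}. (f u - f v) * (g u - g v))
     = (\<Sum>u\<in>V. \<Sum>v\<in>{w\<in>V. E u w}. (f u - f v) * g u) - (\<Sum>u\<in>V. \<Sum>v\<in>{w\<in>V. E u w}. (f u - f v) * g v)"
    by (simp add: right_diff_distrib sum_subtractf)
  also have "(\<Sum>u\<in>V. \<Sum>v\<in>{w\<in>V. E u w}. (f u - f v) * g u) = (\<Sum>u\<in>V. g u * dv V E f u)"
    by (simp add: dv_def sum_distrib_left mult.commute)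
  also have "(\<Sum>u\<in>V. \<Sum>v\<in>{w\<in>V. E u w}. (f u - f v) * g v) = (\<Sum>v\<in>V. \<Sum>u\<in>{u\<in>V. E v u}. (f u - f v) * g v)"
    by (rule sum_swap_graph[OF assms])
  also have "\<dots> = - (\<Sum>v\<in>V. g v * dv V E f v)"
    by (simp add: dv_def sum_distrib_left sum_negf[symmetric] algebra_simps)
  finally show ?thesis unfolding bil_def by simp
qed

lemma energy_bil: "energy V E f = bil V E f f"
  unfolding energy_def bil_def by (simp add: power2_eq_square)

lemma energy_perturb:
  "energy V E (\<lambda>u. f u + t * g u) = energy V E f + 2 * t * bil V E f g + t^2 * energy V E g"
proof -
  have h: "\<And>u v. (f u + t * g u - (f v + t * g v))\<^sup>2 = (f u - f v)\<^sup>2 + (2 * t) * ((f u - f v) * (g u - g v)) + t^2 * (g u - g v)\<^sup>2"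
    by (simp add: power2_eq_square algebra_simps)
  have "(\<Sum>u\<in>V. \<Sum>v\<in>{w\<in>V. E u w}. (f u + t * g u - (f v + t * g v))\<^sup>2)
    = (\<Sum>u\<in>V. \<Sum>v\<in>{w\<in>V. E u w}. (f u - f v)\<^sup>2) + (2 * t) * (\<Sum>u\<in>V. \<Sum>v\<in>{w\<in>V. E u w}. (f u - f v) * (g u - g v))
      + t^2 * (\<Sum>u\<in>V. \<Sum>v\<in>{w\<in>V. E u w}. (g u - g v)\<^sup>2)"
    unfolding h by (simp add: sum.distrib sum_distrib_left)
  then show ?thesis
    unfolding energy_def bil_def by (simp add: algebra_simps)
qed

lemma clamp_energy: "energy V E (\<lambda>v. max 0 (min 1 (f v))) \<le> energy V E (f :: 'a \<Rightarrow> real)"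
proof -
  have "\<And>a b::real. (max 0 (min 1 a) - max 0 (min 1 b))\<^sup>2 \<le> (a - b)\<^sup>2"
  proof -
    fix a b :: real
    have "\<bar>max 0 (min 1 a) - max 0 (min 1 b)\<bar> \<le> \<bar>a - b\<bar>" by (simp add: max_def min_def abs_if split: if_splits)
    then show "(max 0 (min 1 a) - max 0 (min 1 b))\<^sup>2 \<le> (a - b)\<^sup>2" by (simp add: abs_le_square_iff)
  qed
  then show ?thesis unfolding energy_def by (intro mult_left_mono sum_mono) auto
qed

lemma coord_cont [continuous_intros]: "continuous_on S (\<lambda>f::'a \<Rightarrow> real. f v)"
  by (rule continuous_on_subset[OF continuous_on_product_coordinates]) auto

lemma exists_min:
  assumes "x \<noteq> y"
  shows "\<exists>f. f x = 1 \<and> f y = 0 \<and> (\<forall>v. 0 \<le> f v \<and> f v \<le> 1) \<and>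
    (\<forall>g. g x = 1 \<longrightarrow> g y = 0 \<longrightarrow> energy V E f \<le> energy V E g)"
proof -
  define K where "K = (\<lambda>v. if v = x then {1::real} else if v = y then {0} else {0..1})"
  define S where "S = PiE UNIV K"
  have "compactin (product_topology (\<lambda>_. euclidean) UNIV) S"
    unfolding S_def by (subst compactin_PiE) (auto simp: K_def)
  then have cS: "compact S" by (simp add: euclidean_product_topology)
  have Sne: "(\<lambda>v. if v = x then 1 else 0) \<in> S" unfolding S_def K_def using assms by auto
  have cont: "continuous_on S (\<lambda>f. energy V E f)"
    unfolding energy_def by (intro continuous_intros)
  obtain f where fS: "f \<in> S" and fmin: "\<And>g. g \<in> S \<Longrightarrow> energy V E f \<le> energy V E g"
    using continuous_attains_inf[OF cS _ cont] Sne by blast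
  have fK: "\<And>v. f v \<in> K v" using fS by (simp add: S_def PiE_iff)
  have fp: "f x = 1" "f y = 0" "\<And>v. 0 \<le> f v \<and> f v \<le> 1"
  proof -
    show "f x = 1" using fK[of x] by (simp add: K_def)
    show "f y = 0" using fK[of y] assms by (simp add: K_def)
    fix v show "0 \<le> f v \<and> f v \<le> 1" using fK[of v] by (simp add: K_def split: if_splits)
  qed
  have "energy V E f \<le> energy V E g" if "g x = 1" "g y = 0" for g
  proof -
    have "\<And>v. max 0 (min 1 (g v)) \<in> K v" using that assms by (simp add: K_def)
    then have "(\<lambda>v. max 0 (min 1 (g v))) \<in> S" unfolding S_def by (simp add: PiE_iff)
    then have "energy V E f \<le> energy V E (\<lambda>v. max 0 (min 1 (g v)))" by (rule fmin)
    also have "\<dots> \<le> energy V E g" by (rule clamp_energy)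
    finally show ?thesis .
  qed
  then show ?thesis using fp by blast
qed


lemma energy_nonneg: "0 \<le> energy V E f"
  unfolding energy_def by (simp add: sum_nonneg)

context
  fixes V :: "'a set" and E :: "'a \<Rightarrow> 'a \<Rightarrow> bool" and x y :: 'a and f :: "'a \<Rightarrow> real"
  assumes finV: "finite V" and Esym: "\<And>u v. E u v \<Longrightarrow> E v u"
    and EV: "\<And>u v. E u v \<Longrightarrow> u \<in> V \<and> v \<in> V"
    and xV: "x \<in> V" and yV: "y \<in> V" and xy: "x \<noteq> y"
    and fx: "f x = 1" and fy: "f y = 0" and f01: "\<And>v. 0 \<le> f v \<and> f v \<le> 1"
    and fmin: "\<And>g. g x = 1 \<Longrightarrow> g y = 0 \<Longrightarrow> energy V E f \<le> energy V E g"
begin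

lemma bp: "bil V E g h = (\<Sum>u\<in>V. h u * dv V E g u)"
  by (rule bil_parts[OF finV]) (rule Esym)

lemma harmonic:
  assumes vV: "v \<in> V" and vx: "v \<noteq> x" and vy: "v \<noteq> y"
  shows "dv V E f v = 0"
proof -
  define d where "d = (\<lambda>u. if u = v then 1 else (0::real))"
  define D where "D = dv V E f v"
  define q where "q = energy V E d"
  have bd: "bil V E f d = D"
  proof -
    have "(\<Sum>u\<in>V. d u * dv V E f u) = (\<Sum>u\<in>V. if u = v then dv V E f v else 0)"
      by (intro sum.cong) (auto simp: d_def)
    then show ?thesis unfolding bp D_def using vV finV by simp
  qed
  have key: "0 \<le> 2 * t * D + t^2 * q" for t
  proof -
    have "energy V E f \<le> energy V E (\<lambda>u. f u + t * d u)"
      by (rule fmin) (use vx vy fx fy in \<open>auto simp: d_def\<close>)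
    then show ?thesis unfolding energy_perturb bd q_def by simp
  qed
  have q0: "0 \<le> q" unfolding q_def by (rule energy_nonneg)
  define s where "s = 1 / (q + 1)"
  have s0: "0 < s" using q0 by (simp add: s_def)
  have sq: "s * q < 1" using q0 by (simp add: s_def field_simps)
  have "0 \<le> 2 * (- D * s) * D + (- D * s)^2 * q" by (rule key)
  then have "0 \<le> D^2 * s * (s * q - 2)" by (simp add: power2_eq_square algebra_simps)
  moreover have "D^2 * s * (s * q - 2) \<le> D^2 * s * (-1)"
    using sq s0 by (intro mult_left_mono) auto
  ultimately have "D^2 * s \<le> 0" by linarith
  then have "D^2 \<le> 0" using s0 by (simp add: mult_le_0_iff)
  then show ?thesis unfolding D_def by simp
qed

lemma energy_eq_dv: "energy V E f = dv V E f x"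
proof -
  have "energy V E f = (\<Sum>u\<in>V. f u * dv V E f u)"
    unfolding energy_bil bp ..
  also have "\<dots> = (\<Sum>u\<in>V. if u = x then dv V E f x else 0)"
    using harmonic fx fy by (intro sum.cong) auto
  also have "\<dots> = dv V E f x" using xV finV by simp
  finally show ?thesis .
qed

lemma dvx_nonneg: "0 \<le> dv V E f x"
  using energy_eq_dv energy_nonneg by metis

lemma edge_bound_aux:
  assumes ab: "E a b"
  shows "f a - f b \<le> dv V E f x"
proof (cases "f a \<le> f b")
  case True then show ?thesis using dvx_nonneg by linarith
next
  case False
  define S where "S = {u\<in>V. f u > f b}"
  have finS: "finite S" using finV by (simp add: S_def)
  have aS: "a \<in> S" using EV[OF ab] False by (simp add: S_def)
  have xS: "x \<in> S" using xV fx False f01[of a] by (simp add: S_def)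
  have yS: "y \<notin> S" using fy f01[of b] by (simp add: S_def)
  define out where "out = (\<lambda>u. \<Sum>w\<in>{w\<in>V-S. E u w}. f u - f w)"
  have split: "dv V E f u = dv S E f u + out u" if "u \<in> S" for u
  proof -
    have "{w\<in>V. E u w} = {w\<in>S. E u w} \<union> {w\<in>V-S. E u w}" by (auto simp: S_def)
    moreover have "{w\<in>S. E u w} \<inter> {w\<in>V-S. E u w} = {}" by auto
    ultimately show ?thesis unfolding dv_def out_def using finV finS
      by (simp add: sum.union_disjoint)
  qed
  have "(\<Sum>u\<in>S. dv V E f u) = (\<Sum>u\<in>S. if u = x then dv V E f x else 0)"
    using harmonic yS by (intro sum.cong) (auto simp: S_def)
  also have "\<dots> = dv V E f x" using xS finS by simp
  finally have "dv V E f x = (\<Sum>u\<in>S. dv S E f u) + (\<Sum>u\<in>S. out u)"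
    using split by (simp add: sum.distrib)
  also have "(\<Sum>u\<in>S. dv S E f u) = 0" by (rule dv_antisym[OF finS Esym])
  finally have dx: "dv V E f x = (\<Sum>u\<in>S. out u)" by simp
  have outnn: "0 \<le> out u" if "u \<in> S" for u
    unfolding out_def using that by (intro sum_nonneg) (auto simp: S_def)
  have "f a - f b \<le> out a"
    unfolding out_def using finV EV[OF ab] ab aS
    by (intro member_le_sum[where f="\<lambda>w. f a - f w"]) (auto simp: S_def)
  also have "\<dots> \<le> (\<Sum>u\<in>S. out u)" by (rule member_le_sum) (use outnn aS finS in auto)
  finally show ?thesis using dx by simp
qed

lemma edge_bound:
  assumes ab: "E a b"
  shows "\<bar>f a - f b\<bar> \<le> dv V E f x"
  using edge_bound_aux[OF ab] edge_bound_aux[OF Esym[OF ab]] by linarith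

lemma drift:
  fixes g :: "'a \<Rightarrow> real"
  assumes vV: "v \<in> V" and vy: "v \<noteq> y" and C0: "0 < dv V E f x"
  defines "g \<equiv> (\<lambda>u. (1 - f u) / dv V E f x)"
  shows "(\<Sum>w\<in>{w\<in>V. E v w}. (g w)\<^sup>2) \<le> card {w\<in>V. E v w} * ((g v)\<^sup>2 + 1)"
proof -
  define C where "C = dv V E f x"
  define N where "N = {w\<in>V. E v w}"
  have finN: "finite N" using finV by (simp add: N_def)
  have eq: "(g w)\<^sup>2 = (g w - g v)\<^sup>2 + 2 * g v * (g w - g v) + (g v)\<^sup>2" for w
    by (simp add: power2_eq_square algebra_simps)
  have lin: "(\<Sum>w\<in>N. 2 * g v * (g w - g v)) = 0"
  proof (cases "v = x")
    case True then show ?thesis using fx by (simp add: g_def)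
  next
    case False
    have "(\<Sum>w\<in>N. g w - g v) = (\<Sum>w\<in>N. (f v - f w) / C)"
      by (intro sum.cong) (auto simp: g_def C_def diff_divide_distrib[symmetric])
    also have "\<dots> = dv V E f v / C" by (simp add: dv_def N_def sum_divide_distrib)
    also have "\<dots> = 0" using harmonic[OF vV False vy] by simp
    finally show ?thesis by (simp add: sum_distrib_left[symmetric])
  qed
  have sqb: "(g w - g v)\<^sup>2 \<le> 1" if "w \<in> N" for w
  proof -
    have "\<bar>f v - f w\<bar> \<le> C" using edge_bound[of v w] that by (simp add: N_def C_def)
    then have "\<bar>g w - g v\<bar> \<le> 1" using C0 by (simp add: g_def C_def field_simps abs_div_pos[symmetric] diff_divide_distrib[symmetric])
    then show ?thesis using abs_le_square_iff[of "g w - g v" 1] by simp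
  qed
  have "(\<Sum>w\<in>N. (g w)\<^sup>2) = (\<Sum>w\<in>N. (g w - g v)\<^sup>2) + (\<Sum>w\<in>N. 2 * g v * (g w - g v)) + card N * (g v)\<^sup>2"
  proof -
    have "(\<Sum>w\<in>N. (g w)\<^sup>2) = (\<Sum>w\<in>N. (g w - g v)\<^sup>2 + 2 * g v * (g w - g v) + (g v)\<^sup>2)"
      by (rule sum.cong[OF refl]) (rule eq)
    then show ?thesis by (simp add: sum.distrib)
  qed
  also have "\<dots> \<le> card N * 1 + 0 + card N * (g v)\<^sup>2"
    using lin sum_mono[of N "\<lambda>w. (g w - g v)\<^sup>2" "\<lambda>_. 1", OF sqb] by simp
  finally show ?thesis by (simp add: N_def algebra_simps)
qed

end



lemma traj_hd: "xs \<in> set_pmf (srw_traj E n w) \<Longrightarrow> xs ! 0 = w"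
  by (induction n arbitrary: xs w) auto

lemma prob_bind_set:
  assumes "finite N" "N \<noteq> {}"
  shows "measure_pmf.prob (bind_pmf (pmf_of_set N) F) A = (\<Sum>w\<in>N. measure_pmf.prob (F w) A) / card N"
proof -
  have "ennreal (measure_pmf.prob (bind_pmf (pmf_of_set N) F) A) = emeasure (measure_pmf (bind_pmf (pmf_of_set N) F)) A"
    by (simp add: measure_pmf.emeasure_eq_measure)
  also have "\<dots> = (\<Sum>w\<in>N. emeasure (measure_pmf (F w)) A) / card N"
    using assms by (simp add: nn_integral_pmf_of_set)
  also have "\<dots> = (\<Sum>w\<in>N. ennreal (measure_pmf.prob (F w) A)) / card N"
    by (simp add: measure_pmf.emeasure_eq_measure)
  also have "\<dots> = ennreal ((\<Sum>w\<in>N. measure_pmf.prob (F w) A) / card N)"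
    using assms by (simp add: sum_nonneg ennreal_of_nat_eq_real_of_nat divide_ennreal card_gt_0_iff)
  finally show ?thesis by (simp add: sum_nonneg)
qed

lemma pre_event:
  "(#) v -` {xs. \<exists>t. 1 \<le> t \<and> t \<le> Suc n \<and> xs ! t = y} = {xs. \<exists>s\<le>n. xs ! s = y}"
proof (intro set_eqI iffI)
  fix xs assume "xs \<in> (#) v -` {xs. \<exists>t. 1 \<le> t \<and> t \<le> Suc n \<and> xs ! t = y}"
  then obtain t where "1 \<le> t" "t \<le> Suc n" "(v # xs) ! t = y" by auto
  then show "xs \<in> {xs. \<exists>s\<le>n. xs ! s = y}" by (cases t) auto
next
  fix xs assume "xs \<in> {xs. \<exists>s\<le>n. xs ! s = y}"
  then obtain s where "s \<le> n" "xs ! s = y" by auto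
  then show "xs \<in> (#) v -` {xs. \<exists>t. 1 \<le> t \<and> t \<le> Suc n \<and> xs ! t = y}"
    by (auto intro!: exI[of _ "Suc s"])
qed

lemma B_le_A:
  assumes "w \<noteq> y"
  shows "measure_pmf.prob (srw_traj E n w) {xs. \<exists>s\<le>n. xs ! s = y}
    \<le> measure_pmf.prob (srw_traj E n w) {xs. \<exists>t. 1 \<le> t \<and> t \<le> n \<and> xs ! t = y}"
proof -
  have "{xs. \<exists>s\<le>n. xs ! s = y} \<inter> set_pmf (srw_traj E n w) \<subseteq> {xs. \<exists>t. 1 \<le> t \<and> t \<le> n \<and> xs ! t = y}"
  proof (intro subsetI)
    fix xs assume "xs \<in> {xs. \<exists>s\<le>n. xs ! s = y} \<inter> set_pmf (srw_traj E n w)"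
    then obtain s where "s \<le> n" "xs ! s = y" "xs \<in> set_pmf (srw_traj E n w)" by auto
    then show "xs \<in> {xs. \<exists>t. 1 \<le> t \<and> t \<le> n \<and> xs ! t = y}"
      using traj_hd[of xs E n w] assms by (cases s) auto
  qed
  then have "measure_pmf.prob (srw_traj E n w) ({xs. \<exists>s\<le>n. xs ! s = y} \<inter> set_pmf (srw_traj E n w))
    \<le> measure_pmf.prob (srw_traj E n w) {xs. \<exists>t. 1 \<le> t \<and> t \<le> n \<and> xs ! t = y}"
    by (intro measure_pmf.finite_measure_mono) auto
  then show ?thesis by (simp add: measure_Int_set_pmf)
qed

lemma hit_bound:
  fixes g :: "'a \<Rightarrow> real" and K :: real
  assumes finV: "finite V" and EV: "\<And>u v. E u v \<Longrightarrow> u \<in> V \<and> v \<in> V"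
    and K0: "0 \<le> K" and Ky: "K \<le> (g y)\<^sup>2"
    and drift: "\<And>v. v \<in> V \<Longrightarrow> v \<noteq> y \<Longrightarrow>
       (\<Sum>w\<in>{w\<in>V. E v w}. (g w)\<^sup>2) \<le> card {w\<in>V. E v w} * ((g v)\<^sup>2 + 1)"
  shows "v \<in> V \<Longrightarrow> v \<noteq> y \<Longrightarrow>
    K * measure_pmf.prob (srw_traj E n v) {xs. \<exists>t. 1 \<le> t \<and> t \<le> n \<and> xs ! t = y} \<le> (g v)\<^sup>2 + n"
proof (induction n arbitrary: v)
  case 0
  then show ?case by simp
next
  case (Suc n)
  define A where "A = (\<lambda>n. {xs. \<exists>t. 1 \<le> t \<and> t \<le> n \<and> xs ! t = (y::'a)})"
  define Bn where "Bn = {xs. \<exists>s\<le>n. xs ! s = y}"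
  have IH: "\<And>w. w \<in> V \<Longrightarrow> w \<noteq> y \<Longrightarrow> K * measure_pmf.prob (srw_traj E n w) (A n) \<le> (g w)\<^sup>2 + n"
    using Suc.IH unfolding A_def by blast
  have wb: "K * measure_pmf.prob (srw_traj E n w) Bn \<le> (g w)\<^sup>2 + n" if "w \<in> V" for w
  proof (cases "w = y")
    case True
    have "K * measure_pmf.prob (srw_traj E n w) Bn \<le> K * 1"
      using K0 by (intro mult_left_mono) auto
    also have "\<dots> \<le> (g w)\<^sup>2 + n" using Ky True by simp
    finally show ?thesis .
  next
    case False
    have "K * measure_pmf.prob (srw_traj E n w) Bn \<le> K * measure_pmf.prob (srw_traj E n w) (A n)"
      using K0 B_le_A[OF False, of E n] unfolding A_def Bn_def by (intro mult_left_mono) auto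
    also have "\<dots> \<le> (g w)\<^sup>2 + n" using IH[OF that False] .
    finally show ?thesis .
  qed
  have pre: "(#) v -` A (Suc n) = Bn" unfolding A_def Bn_def by (rule pre_event)
  define N where "N = {w. E v w}"
  have NV: "N = {w\<in>V. E v w}" using EV by (auto simp: N_def)
  have finN: "finite N" using finV by (simp add: NV)
  show ?case
  proof (cases "N = {}")
    case True
    then have "srw_traj E (Suc n) v = map_pmf ((#) v) (srw_traj E n v)"
      by (simp add: srw_step_def N_def bind_return_pmf)
    then have "measure_pmf.prob (srw_traj E (Suc n) v) (A (Suc n)) = measure_pmf.prob (srw_traj E n v) Bn"
      by (simp add: pre)
    then show ?thesis using wb[OF Suc.prems(1)] unfolding A_def by simp
  next
    case False
    then have "srw_traj E (Suc n) v = bind_pmf (pmf_of_set N) (\<lambda>w. map_pmf ((#) v) (srw_traj E n w))"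
      using False by (auto simp add: srw_step_def N_def)
    then have "measure_pmf.prob (srw_traj E (Suc n) v) (A (Suc n)) = (\<Sum>w\<in>N. measure_pmf.prob (srw_traj E n w) Bn) / card N"
      using finN False by (simp add: prob_bind_set pre)
    then have "K * measure_pmf.prob (srw_traj E (Suc n) v) (A (Suc n)) = (\<Sum>w\<in>N. K * measure_pmf.prob (srw_traj E n w) Bn) / card N"
      by (simp add: sum_distrib_left)
    also have "\<dots> \<le> (\<Sum>w\<in>N. (g w)\<^sup>2 + n) / card N"
      using wb NV by (intro divide_right_mono sum_mono) auto
    also have "\<dots> = (\<Sum>w\<in>N. (g w)\<^sup>2) / card N + n"
      using finN False by (simp add: sum.distrib add_divide_distrib card_gt_0_iff)
    also have "\<dots> \<le> ((g v)\<^sup>2 + 1) + n"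
      using drift[OF Suc.prems] finN False unfolding NV[symmetric]
      by (simp add: divide_le_eq card_gt_0_iff mult.commute)
    finally show ?thesis unfolding A_def by simp
  qed
qed


theorem lemma2p1:
  fixes V :: "'a set" and E :: "'a \<Rightarrow> 'a \<Rightarrow> bool" and x y :: 'a and \<epsilon> :: real
  assumes "finite_connected_graph V E" and "x \<in> V" and "y \<in> V" and "\<epsilon> > 0"
  shows "srw_hit_prob E x y (\<epsilon> * (eff_resistance V E x y)\<^sup>2) \<le> \<epsilon>"
proof -
  note G = assms(1)[unfolded finite_connected_graph_def]
  have finV: "finite V" using G by blast
  have Esym: "\<And>u v. E u v \<Longrightarrow> E v u" using G by blast
  have EV: "\<And>u v. E u v \<Longrightarrow> u \<in> V \<and> v \<in> V" using G by blast
  define R where "R = eff_resistance V E x y"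
  define T where "T = \<epsilon> * R\<^sup>2"
  define n where "n = nat \<lfloor>T\<rfloor>"
  have T0: "0 \<le> T" using assms(4) by (simp add: T_def)
  have ev: "{xs. \<exists>t. 1 \<le> t \<and> real t \<le> T \<and> xs ! t = y} = {xs. \<exists>t. 1 \<le> t \<and> t \<le> n \<and> xs ! t = y}"
  proof -
    have "real t \<le> T \<longleftrightarrow> t \<le> n" for t
    proof
      assume "real t \<le> T"
      then have "int t \<le> \<lfloor>T\<rfloor>" by (simp add: le_floor_iff)
      then show "t \<le> n" unfolding n_def by simp
    next
      assume "t \<le> n"
      then have "real t \<le> real (nat \<lfloor>T\<rfloor>)" unfolding n_def by simp
      also have "\<dots> \<le> T" using T0 by (rule of_nat_floor)
      finally show "real t \<le> T" .
    qed
    then show ?thesis by simp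
  qed
  have hp: "srw_hit_prob E x y (\<epsilon> * (eff_resistance V E x y)\<^sup>2)
      = measure_pmf.prob (srw_traj E n x) {xs. \<exists>t. 1 \<le> t \<and> t \<le> n \<and> xs ! t = y}"
    unfolding srw_hit_prob_def R_def[symmetric] T_def[symmetric] n_def[symmetric] ev ..
  show ?thesis
  proof (cases "R = 0")
    case True
    then have "n = 0" by (simp add: n_def T_def)
    then show ?thesis unfolding hp using assms(4) by simp
  next
    case False
    then have xy: "x \<noteq> y" by (auto simp: R_def eff_resistance_def)
    obtain f where fx: "f x = 1" and fy: "f y = 0" and f01: "\<And>v. 0 \<le> f v \<and> f v \<le> 1"
      and fmin: "\<And>g. g x = 1 \<Longrightarrow> g y = 0 \<Longrightarrow> energy V E f \<le> energy V E g"
      using exists_min[OF xy, of V E] by blast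
    define C where "C = eff_conductance V E x y"
    have "C = energy V E f"
      unfolding C_def eff_conductance_def
      by (rule cInf_eq_minimum) (use fx fy fmin in auto)
    also have "\<dots> = dv V E f x"
      by (rule energy_eq_dv[of V E x y f, OF finV Esym EV assms(2,3) xy fx fy f01 fmin])
    finally have Cd: "C = dv V E f x" .
    have RC: "R = 1 / C" using xy by (simp add: R_def C_def eff_resistance_def)
    have "C \<noteq> 0" using False RC by auto
    moreover have "0 \<le> C" unfolding Cd by (rule dvx_nonneg[of V E x y f, OF finV Esym EV assms(2,3) xy fx fy f01 fmin])
    ultimately have C0: "0 < C" by simp
    define g where "g = (\<lambda>u. (1 - f u) / C)"
    define K where "K = R\<^sup>2"
    have gx: "g x = 0" using fx by (simp add: g_def)
    have gy: "g y = R" using fy RC by (simp add: g_def)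
    have K0: "0 < K" using False by (simp add: K_def)
    have dr: "\<And>v. v \<in> V \<Longrightarrow> v \<noteq> y \<Longrightarrow>
       (\<Sum>w\<in>{w\<in>V. E v w}. (g w)\<^sup>2) \<le> card {w\<in>V. E v w} * ((g v)\<^sup>2 + 1)"
      unfolding g_def Cd
      by (rule drift[of V E x y f, OF finV Esym EV assms(2,3) xy fx fy f01 fmin]) (use C0 Cd in auto)
    have "K * measure_pmf.prob (srw_traj E n x) {xs. \<exists>t. 1 \<le> t \<and> t \<le> n \<and> xs ! t = y} \<le> (g x)\<^sup>2 + n"
      by (rule hit_bound[of V E K g y, OF finV EV _ _ dr assms(2) xy]) (use K0 gy K_def in auto)
    also have "\<dots> \<le> \<epsilon> * K" using gx T0 by (simp add: n_def K_def T_def)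
    finally have "K * measure_pmf.prob (srw_traj E n x) {xs. \<exists>t. 1 \<le> t \<and> t \<le> n \<and> xs ! t = y} \<le> K * \<epsilon>"
      by (simp add: mult.commute)
    then show ?thesis unfolding hp using K0 by simp
  qed
qed

end
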